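(* Let $G$ be a (weighted) graph that is not a multigraph and is $2$-connected, and let $s, d$ be a source-destination pair. Suppose a forwarding subgraph (FS) uses the shortest path $P(s,d)$ between $s$ and $d$ as the primary path and can avoid any single link failure along the primary path. Then the FS has at least $2|P(s,d)| + 1$ edges, where $|P(s,d)|$ is the number of edges of $P(s,d)$. Moreover, there exist graphs for which this bound is tight.
   Context: A forwarding subgraph (FS) is a directed acyclic subgraph of the network graph specifying the paths a packet may take from source $s$ to destination $d$. It contains a designated primary path from $s$ to $d$. "Avoiding any single link failure along the primary path" means that for every node $v_i$ on the primary path, the FS contains an alternate path from $v_i$ to $d$ that does not use $v_i$'s outgoing primary-path link. Throughout, the graph is assumed not to be a multigraph and to be $2$-connected. *)

theory Defs
  imports Complex_Main
begin

text \<open>Undirected simple graphs: vertex set V, edges are 2-element subsets of V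
  (so no loops and, being a set of sets, no parallel edges, i.e. not a multigraph).\<close>
definition simple_graph :: "'a set \<Rightarrow> 'a set set \<Rightarrow> bool" where
  "simple_graph V E \<longleftrightarrow> finite V \<and> (\<forall>e\<in>E. e \<subseteq> V \<and> card e = 2)"

definition arcs_of :: "'a list \<Rightarrow> ('a \<times> 'a) set" where
  "arcs_of xs = set (zip xs (tl xs))"

definition upath :: "'a set \<Rightarrow> 'a set set \<Rightarrow> 'a list \<Rightarrow> bool" where
  "upath V E p \<longleftrightarrow> p \<noteq> [] \<and> distinct p \<and> set p \<subseteq> V \<and>
     (\<forall>(u,v)\<in>arcs_of p. {u,v} \<in> E)"

definition connected_graph :: "'a set \<Rightarrow> 'a set set \<Rightarrow> bool" where
  "connected_graph V E \<longleftrightarrow>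
     (\<forall>u\<in>V. \<forall>v\<in>V. \<exists>p. upath V E p \<and> hd p = u \<and> last p = v)"

definition two_connected :: "'a set \<Rightarrow> 'a set set \<Rightarrow> bool" where
  "two_connected V E \<longleftrightarrow> card V \<ge> 3 \<and> connected_graph V E \<and>
     (\<forall>x\<in>V. connected_graph (V - {x}) {e\<in>E. x \<notin> e})"

definition path_weight :: "('a set \<Rightarrow> real) \<Rightarrow> 'a list \<Rightarrow> real" where
  "path_weight w p = sum_list (map (\<lambda>(u,v). w {u,v}) (zip p (tl p)))"

definition path_len :: "'a list \<Rightarrow> nat" where
  "path_len p = length p - 1"

definition shortest_path ::
  "'a set \<Rightarrow> 'a set set \<Rightarrow> ('a set \<Rightarrow> real) \<Rightarrow> 'a \<Rightarrow> 'a \<Rightarrow> 'a list \<Rightarrow> bool" where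
  "shortest_path V E w s d p \<longleftrightarrow> upath V E p \<and> hd p = s \<and> last p = d \<and>
     (\<forall>q. upath V E q \<and> hd q = s \<and> last q = d \<longrightarrow> path_weight w p \<le> path_weight w q)"

definition dwalk :: "('a \<times> 'a) set \<Rightarrow> 'a list \<Rightarrow> 'a \<Rightarrow> 'a \<Rightarrow> bool" where
  "dwalk F q u v \<longleftrightarrow> q \<noteq> [] \<and> hd q = u \<and> last q = v \<and> arcs_of q \<subseteq> F"

definition forwarding_subgraph ::
  "'a set \<Rightarrow> 'a set set \<Rightarrow> 'a \<Rightarrow> 'a \<Rightarrow> 'a list \<Rightarrow> ('a \<times> 'a) set \<Rightarrow> bool" where
  "forwarding_subgraph V E s d P F \<longleftrightarrow>
     (\<forall>(u,v)\<in>F. {u,v} \<in> E) \<and> acyclic F \<and>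
     upath V E P \<and> hd P = s \<and> last P = d \<and> arcs_of P \<subseteq> F"

definition avoids_single_link_failures ::
  "'a \<Rightarrow> 'a list \<Rightarrow> ('a \<times> 'a) set \<Rightarrow> bool" where
  "avoids_single_link_failures d P F \<longleftrightarrow>
     (\<forall>i < length P - 1. \<exists>q. dwalk F q (P!i) d \<and> (P!i, P!(i+1)) \<notin> arcs_of q)"

end

theory Submission
  imports Defs
begin


lemma arcs_of_Cons2: "arcs_of (u#y#r) = insert (u,y) (arcs_of (y#r))"
  by (simp add: arcs_of_def)

lemma arcs_of_single[simp]: "arcs_of [u] = {}"
  by (simp add: arcs_of_def)

lemma dwalk_step:
  assumes "dwalk F q u v" "u \<noteq> v"
  shows "\<exists>y r. q = u#y#r \<and> (u,y)\<in>F \<and> dwalk F (y#r) y v"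
proof -
  obtain q' where q: "q = u # q'" using assms(1) unfolding dwalk_def
    by (cases q) auto
  have "q' \<noteq> []" using assms q unfolding dwalk_def by auto
  then obtain y r where "q' = y#r" by (cases q') auto
  then show ?thesis using assms q unfolding dwalk_def by (auto simp: arcs_of_Cons2)
qed

lemma arc_nth:
  assumes "Suc i < length P"
  shows "(P!i, P!Suc i) \<in> arcs_of P"
proof -
  have "zip P (tl P) ! i = (P!i, P!Suc i)" using assms by (simp add: nth_tl)
  moreover have "i < length (zip P (tl P))" using assms by simp
  ultimately show ?thesis unfolding arcs_of_def by (metis nth_mem)
qed

lemma path_rtrancl:
  assumes "arcs_of P \<subseteq> F" "j \<le> l" "l < length P"
  shows "(P!j, P!l) \<in> F\<^sup>*"
  using assms(2,3)
proof (induction l)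
  case 0 then show ?case by simp
next
  case (Suc l)
  show ?case
  proof (cases "j = Suc l")
    case True then show ?thesis by simp
  next
    case False
    then have "(P!j, P!l) \<in> F\<^sup>*" using Suc by auto
    moreover have "(P!l, P!Suc l) \<in> F" using arc_nth[of l P] Suc.prems assms(1) by auto
    ultimately show ?thesis by (meson rtrancl.rtrancl_into_rtrancl)
  qed
qed

lemma part1:
  assumes "simple_graph V E" "s \<noteq> d"
    "forwarding_subgraph V E s d P F" "avoids_single_link_failures d P F"
  shows "card F \<ge> 2 * path_len P + 1"
proof -
  define n where "n = path_len P"
  have FE: "\<forall>(u,v)\<in>F. {u,v} \<in> E" and ac: "acyclic F" and up: "upath V E P"
    and hs: "hd P = s" and ld: "last P = d" and aP: "arcs_of P \<subseteq> F"
    using assms(3) unfolding forwarding_subgraph_def by auto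
  have Pne: "P \<noteq> []" and dP: "distinct P" using up unfolding upath_def by auto
  have l1: "length P \<noteq> 1"
  proof
    assume "length P = 1"
    then obtain a where "P = [a]" by (cases P) auto
    then show False using hs ld assms(2) by simp
  qed
  have lenP: "length P = n + 1" using Pne unfolding n_def path_len_def by (cases P) auto
  have n1: "n \<ge> 1" using lenP l1 by simp
  have dn: "d = P!n" using ld Pne lenP by (simp add: last_conv_nth)
  have finF: "finite F"
  proof -
    have "F \<subseteq> V \<times> V"
    proof
      fix a assume "a \<in> F"
      then obtain u v where a: "a = (u,v)" "(u,v)\<in>F" by (cases a) auto
      then have "{u,v} \<in> E" using FE by auto
      then have "{u,v} \<subseteq> V" using assms(1) unfolding simple_graph_def by auto
      then show "a \<in> V \<times> V" using a by auto
    qed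
    moreover have "finite V" using assms(1) unfolding simple_graph_def by auto
    ultimately show ?thesis by (meson finite_SigmaI finite_subset)
  qed
  have nd: "P!i \<noteq> d" if "i < n" for i
    using dP lenP that dn by (simp add: nth_eq_iff_index_eq)
  have "\<forall>i. \<exists>y. i<n \<longrightarrow> (P!i,y)\<in>F \<and> (\<exists>r. dwalk F (y#r) y d) \<and> y \<noteq> P!Suc i"
  proof (intro allI)
    fix i
    show "\<exists>y. i<n \<longrightarrow> (P!i,y)\<in>F \<and> (\<exists>r. dwalk F (y#r) y d) \<and> y \<noteq> P!Suc i"
    proof (cases "i < n")
      case False then show ?thesis by simp
    next
      case i: True
    obtain q where q: "dwalk F q (P!i) d" "(P!i, P!(i+1)) \<notin> arcs_of q"
      using assms(4) i lenP unfolding avoids_single_link_failures_def by auto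
    obtain y r where "q = P!i#y#r" "(P!i,y)\<in>F" "dwalk F (y#r) y d"
      using dwalk_step[OF q(1) nd[OF i]] by auto
    then show "\<exists>y. i<n \<longrightarrow> (P!i,y)\<in>F \<and> (\<exists>r. dwalk F (y#r) y d) \<and> y \<noteq> P!Suc i"
      using q(2) by (auto simp: arcs_of_Cons2)
    qed
  qed
  then obtain b where b: "\<forall>i<n. (P!i, b i)\<in>F \<and> (\<exists>r. dwalk F (b i#r) (b i) d) \<and> b i \<noteq> P!Suc i"
    using choice[of "\<lambda>i y. i<n \<longrightarrow> (P!i,y)\<in>F \<and> (\<exists>r. dwalk F (y#r) y d) \<and> y \<noteq> P!Suc i"] by blast
  define x where "x = b (n-1)"
  have xF: "(P!(n-1), x) \<in> F" and xw: "\<exists>r. dwalk F (x#r) x d" and xn: "x \<noteq> P!n"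
  proof -
    have "n - 1 < n" "Suc (n-1) = n" using n1 by auto
    then show "(P!(n-1), x) \<in> F" "\<exists>r. dwalk F (x#r) x d" "x \<noteq> P!n"
      using b unfolding x_def by metis+
  qed
  have xP: "x \<notin> set P"
  proof
    assume "x \<in> set P"
    then obtain j where j: "j < length P" "x = P!j" by (metis in_set_conv_nth)
    show False
    proof (cases "j = n")
      case True then show ?thesis using xn j by simp
    next
      case False
      then have "j \<le> n - 1" using j lenP by auto
      then have "(P!j, P!(n-1)) \<in> F\<^sup>*" using path_rtrancl[OF aP] lenP by auto
      then have "(x,x) \<in> F\<^sup>+" using xF j(2) by (meson rtrancl_into_trancl1)
      then show False using ac unfolding acyclic_def by auto
    qed
  qed
  have xd: "x \<noteq> d" using xP dn lenP by auto
  obtain r where "dwalk F (x#r) x d" using xw by auto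
  from dwalk_step[OF this xd] obtain z where xz: "(x,z) \<in> F" by auto
  define A where "A = (\<lambda>i. (P!i, P!Suc i)) ` {..<n}"
  define B where "B = (\<lambda>i. (P!i, b i)) ` {..<n}"
  have injP: "inj_on (\<lambda>i. P!i) {..<n}"
    using dP lenP by (auto simp: inj_on_def nth_eq_iff_index_eq)
  have cA: "card A = n" unfolding A_def
    by (subst card_image) (auto simp: inj_on_def dest: inj_onD[OF injP])
  have cB: "card B = n" unfolding B_def
    by (subst card_image) (auto simp: inj_on_def dest: inj_onD[OF injP])
  have AB: "A \<inter> B = {}" unfolding A_def B_def
    using b inj_onD[OF injP] by fastforce
  have tails: "fst ` (A \<union> B) \<subseteq> set P" unfolding A_def B_def using lenP by auto
  have C: "(x,z) \<notin> A \<union> B" using tails xP by force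
  have "card (insert (x,z) (A \<union> B)) = 2*n + 1"
    using C AB cA cB by (simp add: A_def B_def card_Un_disjoint)
  moreover have "insert (x,z) (A \<union> B) \<subseteq> F"
  proof -
    have "(P!i, P!Suc i) \<in> F" if "i < n" for i
      using arc_nth[of i P] that lenP aP by auto
    then show ?thesis using xz b unfolding A_def B_def by auto
  qed
  ultimately show ?thesis using card_mono[OF finF, of "insert (x,z) (A \<union> B)"] unfolding n_def by simp
qed



lemma complete_connected:
  assumes "\<forall>u\<in>V. \<forall>v\<in>V. u \<noteq> v \<longrightarrow> {u,v} \<in> E"
  shows "connected_graph V E"
  unfolding connected_graph_def
proof (intro ballI)
  fix u v assume uv: "u \<in> V" "v \<in> V"
  show "\<exists>p. upath V E p \<and> hd p = u \<and> last p = v"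
  proof (cases "u = v")
    case True then show ?thesis using uv
      by (intro exI[of _ "[u]"]) (auto simp: upath_def)
  next
    case False then show ?thesis using uv assms
      by (intro exI[of _ "[u,v]"]) (auto simp: upath_def arcs_of_def)
  qed
qed

lemma pw_Cons2: "path_weight w (x#y#r) = w {x,y} + path_weight w (y#r)"
  by (simp add: path_weight_def)
lemma pw_single: "path_weight w [x] = 0"
  by (simp add: path_weight_def)

lemma pw_lower:
  assumes "\<forall>u v. w {u,v} \<ge> f v - f u" "p \<noteq> []"
  shows "path_weight w p \<ge> f (last p) - f (hd p)"
  using assms(2)
proof (induction p)
  case Nil then show ?case by simp
next
  case (Cons x p)
  show ?case
  proof (cases p)
    case Nil then show ?thesis by (simp add: pw_single)
  next
    case (Cons y r)
    have "path_weight w p \<ge> f (last p) - f y" using Cons.IH Cons by simp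
    moreover have "w {x,y} \<ge> f y - f x" using assms(1) by auto
    ultimately show ?thesis using Cons by (simp add: pw_Cons2)
  qed
qed

definition wt :: "nat set \<Rightarrow> real" where "wt e = real (Max e) - real (Min e)"

lemma wt_pair: "wt {u,v} = \<bar>real u - real v\<bar>"
  by (simp add: wt_def max_def min_def)

lemma pw_upt: "path_weight wt [m..<m+n+1] = real n"
proof (induction n arbitrary: m)
  case 0 then show ?case by (simp add: pw_single)
next
  case (Suc n)
  have e1: "[m..<m+Suc n+1] = m # [Suc m..<Suc m + n + 1]"
    by (simp add: upt_conv_Cons del: upt_Suc)
  have e2: "[Suc m..<Suc m + n + 1] = Suc m # [Suc (Suc m)..<Suc m+n+1]"
    by (simp add: upt_conv_Cons del: upt_Suc)
  have "path_weight wt [m..<m+Suc n+1] = wt {m, Suc m} + path_weight wt [Suc m..<Suc m + n + 1]"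
    unfolding e1 by (subst e2, subst pw_Cons2, subst e2[symmetric]) (rule refl)
  then show ?case using Suc.IH[of "Suc m"] by (simp add: wt_pair del: upt_Suc)
qed

lemma arcs_upt: "arcs_of [0..<Suc k] = (\<lambda>i. (i, Suc i)) ` {..<k}"
proof -
  have "tl [0..<Suc k] = [1..<Suc k]" by (simp add: upt_conv_Cons del: upt_Suc)
  moreover have "zip [0..<Suc k] [Suc 0..<Suc k] = map (\<lambda>i. (i, Suc i)) [0..<k]"
    by (rule nth_equalityI) (simp_all del: upt_Suc)
  ultimately show ?thesis unfolding arcs_of_def
    by (simp del: upt_Suc add: atLeast0LessThan)
qed

lemma part2:
  assumes k: "k \<ge> (1::nat)"
  shows "\<exists>(V :: nat set) E (w :: nat set \<Rightarrow> real) s d P F.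
            simple_graph V E \<and> two_connected V E \<and> (\<forall>e\<in>E. w e > 0) \<and>
            s \<in> V \<and> d \<in> V \<and> s \<noteq> d \<and>
            shortest_path V E w s d P \<and> path_len P = k \<and>
            forwarding_subgraph V E s d P F \<and>
            avoids_single_link_failures d P F \<and>
            finite F \<and> card F = 2 * path_len P + 1"
proof -
  define V where "V = {..Suc k}"
  define E where "E = {e. e \<subseteq> V \<and> card e = 2}"
  define P where "P = [0..<Suc k]"
  define A where "A = (\<lambda>i. (i, Suc i)) ` {..<k}"
  define B where "B = (\<lambda>i. (i, Suc k)) ` {..<k}"
  define F where "F = insert (Suc k, k) (A \<union> B)"
  have Epair: "{u,v} \<in> E \<longleftrightarrow> u \<in> V \<and> v \<in> V \<and> u \<noteq> v" for u v
    unfolding E_def by (auto simp: card_insert_if)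
  have sg: "simple_graph V E" unfolding simple_graph_def E_def V_def by auto
  have tc: "two_connected V E"
    unfolding two_connected_def
  proof (intro conjI ballI)
    show "3 \<le> card V" using k unfolding V_def by simp
    show "connected_graph V E" by (rule complete_connected) (auto simp: Epair)
    fix x assume "x \<in> V"
    show "connected_graph (V - {x}) {e \<in> E. x \<notin> e}"
      by (rule complete_connected) (auto simp: Epair)
  qed
  have wpos: "\<forall>e\<in>E. wt e > 0"
  proof
    fix e assume "e \<in> E"
    then have "e \<subseteq> V" "card e = 2" unfolding E_def by auto
    then obtain u v where "e = {u,v}" "u \<noteq> v" by (meson card_2_iff)
    then show "wt e > 0" by (simp add: wt_pair)
  qed
  have lenP: "length P = Suc k" unfolding P_def by simp
  have hdP: "hd P = 0" unfolding P_def by (simp add: upt_conv_Cons del: upt_Suc)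
  have lastP: "last P = k" unfolding P_def by simp
  have aP: "arcs_of P = A" unfolding P_def A_def by (rule arcs_upt)
  have upP: "upath V E P"
    unfolding upath_def using aP by (auto simp: P_def V_def A_def Epair)
  have wP: "path_weight wt P = real k" using pw_upt[of 0 k] unfolding P_def by simp
  have sp: "shortest_path V E wt 0 k P"
    unfolding shortest_path_def
  proof (intro conjI allI impI)
    fix q assume q: "upath V E q \<and> hd q = 0 \<and> last q = k"
    have "path_weight wt q \<ge> real (last q) - real (hd q)"
      by (rule pw_lower) (use q in \<open>auto simp: wt_pair upath_def\<close>)
    then show "path_weight wt P \<le> path_weight wt q" using q wP by simp
  qed (use upP hdP lastP in auto)
  have FinE: "\<forall>(u,v)\<in>F. {u,v} \<in> E"
    unfolding F_def A_def B_def by (auto simp: Epair V_def)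
  define r :: "nat \<Rightarrow> nat" where "r = (\<lambda>v. if v < k then v else if v = Suc k then k else Suc k)"
  have "F \<subseteq> {(x,y). r y < r x}\<inverse>" unfolding F_def A_def B_def r_def by auto
  moreover have "acyclic ({(x,y). r y < r x}\<inverse>)"
  proof -
    have "wf {(x,y). r x < r y}" using wf_measure[of r] unfolding measure_def inv_image_def
      by simp
    then have "acyclic {(x,y). r x < r y}" by (rule wf_acyclic)
    moreover have "{(x,y). r y < r x}\<inverse> = {(x,y). r x < r y}" by auto
    ultimately show ?thesis by simp
  qed
  ultimately have acF: "acyclic F" by (meson acyclic_subset)
  have fs: "forwarding_subgraph V E 0 k P F"
    unfolding forwarding_subgraph_def using FinE acF upP hdP lastP aP F_def by auto
  have av: "avoids_single_link_failures k P F"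
    unfolding avoids_single_link_failures_def
  proof (intro allI impI)
    fix i assume "i < length P - 1"
    then have i: "i < k" using lenP by simp
    have Pi: "P!i = i" "P!(i+1) = Suc i" using i unfolding P_def by (auto simp del: upt_Suc)
    show "\<exists>q. dwalk F q (P!i) k \<and> (P!i, P!(i+1)) \<notin> arcs_of q"
      using i Pi
      by (intro exI[of _ "[i, Suc k, k]"])
         (auto simp: dwalk_def arcs_of_Cons2 F_def B_def)
  qed
  have plen: "path_len P = k" unfolding path_len_def lenP by simp
  have finF: "finite F" unfolding F_def A_def B_def by simp
  have cA: "card A = k" unfolding A_def by (subst card_image) (auto simp: inj_on_def)
  have cB: "card B = k" unfolding B_def by (subst card_image) (auto simp: inj_on_def)
  have AB: "A \<inter> B = {}" unfolding A_def B_def by auto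
  have C: "(Suc k, k) \<notin> A \<union> B" unfolding A_def B_def by auto
  have cF: "card F = 2 * k + 1"
    unfolding F_def using C AB cA cB by (simp add: A_def B_def card_Un_disjoint)
  show ?thesis
    apply (rule exI[of _ V], rule exI[of _ E], rule exI[of _ wt], rule exI[of _ 0],
           rule exI[of _ k], rule exI[of _ P], rule exI[of _ F])
    using sg tc wpos sp plen fs av finF cF k by (auto simp: V_def)
qed

theorem theorem1:
  shows "(\<forall>(V :: 'a set) E (w :: 'a set \<Rightarrow> real) s d P F.
            simple_graph V E \<and> two_connected V E \<and> (\<forall>e\<in>E. w e > 0) \<and>
            s \<in> V \<and> d \<in> V \<and> s \<noteq> d \<and>
            shortest_path V E w s d P \<and> forwarding_subgraph V E s d P F \<and>
            avoids_single_link_failures d P F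
            \<longrightarrow> card F \<ge> 2 * path_len P + 1)
       \<and> (\<forall>k::nat \<ge> 1. \<exists>(V :: nat set) E (w :: nat set \<Rightarrow> real) s d P F.
            simple_graph V E \<and> two_connected V E \<and> (\<forall>e\<in>E. w e > 0) \<and>
            s \<in> V \<and> d \<in> V \<and> s \<noteq> d \<and>
            shortest_path V E w s d P \<and> path_len P = k \<and>
            forwarding_subgraph V E s d P F \<and>
            avoids_single_link_failures d P F \<and>
            finite F \<and> card F = 2 * path_len P + 1)"
proof (intro conjI allI impI)
  fix V :: "'a set" and E w s d P F
  assume h: "simple_graph V E \<and> two_connected V E \<and> (\<forall>e\<in>E. w e > 0) \<and>
            s \<in> V \<and> d \<in> V \<and> s \<noteq> d \<and>
            shortest_path V E w s d P \<and> forwarding_subgraph V E s d P F \<and>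
            avoids_single_link_failures d P F"
  show "card F \<ge> 2 * path_len P + 1"
    by (rule part1[of V E s d P F]) (use h in simp_all)
next
  fix k :: nat assume "k \<ge> 1"
  then show "\<exists>(V :: nat set) E (w :: nat set \<Rightarrow> real) s d P F.
            simple_graph V E \<and> two_connected V E \<and> (\<forall>e\<in>E. w e > 0) \<and>
            s \<in> V \<and> d \<in> V \<and> s \<noteq> d \<and>
            shortest_path V E w s d P \<and> path_len P = k \<and>
            forwarding_subgraph V E s d P F \<and>
            avoids_single_link_failures d P F \<and>
            finite F \<and> card F = 2 * path_len P + 1"
    by (rule part2)
qed

end
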